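(* Let $\alpha\in(1,2)$, $\sigma=1-\alpha/2$, $T>0$, $N$ a positive integer, $\tau=T/N$, $t_j=j\tau$ and $t_{k+\sigma}=t_k+\sigma\tau$. Let $k\in\{1,2,\dots,N-1\}$ and suppose $p\in C^{4}[t_0,t_{k+1}]$. Define $$r_k={}_C\mathrm{D}_{0,t}^\alpha p(t)\big|_{t=t_{k+\sigma}}-\mathcal{D}p(t)\big|_{t=t_{k+\sigma}},\qquad \mathcal{D}p(t)\big|_{t=t_{k+\sigma}}=\frac{1}{\Gamma(2-\alpha)}\sum_{l=0}^{k}c_l^{(k,\alpha)}\,\delta_t^2p^{k-l}.$$ Then $$|r_k|\leq\frac{1}{\Gamma(3-\alpha)}\max_{t_0\leq t\leq t_{k+1}}|p^{(4)}(t)|\Big[\frac{5\,t_{k+\sigma}^{2-\alpha}}{6}\tau^2-\frac{5}{8}\Big(\sigma+\frac{1}{2}\Big)^{2-\alpha}\tau^{4-\alpha}\Big].$$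
   Context: For $\alpha\in(1,2)$ the Caputo derivative is ${}_C\mathrm{D}_{0,t}^\alpha p(t)=\frac{1}{\Gamma(2-\alpha)}\int_0^t p''(s)(t-s)^{1-\alpha}\,\mathrm{d}s$. Write $p^j=p(t_j)$, $\delta_tp^{j-\frac12}=(p^j-p^{j-1})/\tau$, $\delta_t^2p^0=\frac{2}{\tau}\big[\delta_tp^{\frac12}-p'(t_0)\big]$, and $\delta_t^2p^j=(\delta_tp^{j+\frac12}-\delta_tp^{j-\frac12})/\tau$ for $j\ge1$. For integers $k\ge1$ define $a_1^{(k,\alpha)}=\frac32\tau^{2-\alpha}\int_0^{1/2}(s-\frac13)(k+\sigma-s)^{1-\alpha}\,\mathrm{d}s$; $a_l^{(k,\alpha)}=\tau^{2-\alpha}\int_0^1(s-\frac12)(k+\sigma-l+\frac32-s)^{1-\alpha}\,\mathrm{d}s$ for $2\le l\le k$; $b_l^{(k,\alpha)}=\tau^{2-\alpha}\int_0^1(\frac32-s)(k+\sigma-l+\frac12-s)^{1-\alpha}\,\mathrm{d}s$ for $1\le l\le k-1$; $b_k^{(k,\alpha)}=\tau^{2-\alpha}\int_0^{\sigma+1/2}s^{1-\alpha}\,\mathrm{d}s$; $c_l^{(k,\alpha)}=a_{k-l}^{(k,\alpha)}+b_{k-l}^{(k,\alpha)}$ for $0\le l\le k-1$, and $c_k^{(k,\alpha)}=\frac32\tau^{2-\alpha}\int_0^{1/2}(1-s)(k+\sigma-s)^{1-\alpha}\,\mathrm{d}s$. *)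

theory Defs
  imports "HOL-Analysis.Analysis"
begin

text \<open>Caputo derivative of order alpha in (1,2), given the second derivative p2 of p.\<close>
definition caputo :: "real \<Rightarrow> (real \<Rightarrow> real) \<Rightarrow> real \<Rightarrow> real" where
  "caputo \<alpha> p2 t = (1 / Gamma (2 - \<alpha>)) * integral {0..t} (\<lambda>s. p2 s * (t - s) powr (1 - \<alpha>))"

definition coef_a :: "real \<Rightarrow> real \<Rightarrow> real \<Rightarrow> nat \<Rightarrow> nat \<Rightarrow> real" where
  "coef_a \<alpha> \<sigma> \<tau> k l =
     (if l = 1 then 3/2 * \<tau> powr (2 - \<alpha>) *
         integral {0..1/2} (\<lambda>s. (s - 1/3) * (real k + \<sigma> - s) powr (1 - \<alpha>))
      else \<tau> powr (2 - \<alpha>) *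
         integral {0..1} (\<lambda>s. (s - 1/2) * (real k + \<sigma> - real l + 3/2 - s) powr (1 - \<alpha>)))"

definition coef_b :: "real \<Rightarrow> real \<Rightarrow> real \<Rightarrow> nat \<Rightarrow> nat \<Rightarrow> real" where
  "coef_b \<alpha> \<sigma> \<tau> k l =
     (if l = k then \<tau> powr (2 - \<alpha>) * integral {0..\<sigma> + 1/2} (\<lambda>s. s powr (1 - \<alpha>))
      else \<tau> powr (2 - \<alpha>) *
         integral {0..1} (\<lambda>s. (3/2 - s) * (real k + \<sigma> - real l + 1/2 - s) powr (1 - \<alpha>)))"

definition coef_c :: "real \<Rightarrow> real \<Rightarrow> real \<Rightarrow> nat \<Rightarrow> nat \<Rightarrow> real" where
  "coef_c \<alpha> \<sigma> \<tau> k l =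
     (if l = k then 3/2 * \<tau> powr (2 - \<alpha>) *
         integral {0..1/2} (\<lambda>s. (1 - s) * (real k + \<sigma> - s) powr (1 - \<alpha>))
      else coef_a \<alpha> \<sigma> \<tau> k (k - l) + coef_b \<alpha> \<sigma> \<tau> k (k - l))"

text \<open>Second difference quotient delta_t^2 p^j, with p1 the first derivative of p.\<close>
definition delta2 :: "real \<Rightarrow> (real \<Rightarrow> real) \<Rightarrow> (real \<Rightarrow> real) \<Rightarrow> nat \<Rightarrow> real" where
  "delta2 \<tau> p p1 j =
     (if j = 0 then 2 / \<tau> * ((p \<tau> - p 0) / \<tau> - p1 0)
      else ((p (real (j+1) * \<tau>) - p (real j * \<tau>)) / \<tau>
            - (p (real j * \<tau>) - p (real (j-1) * \<tau>)) / \<tau>) / \<tau>)"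

end

theory Submission
  imports Defs
begin

lemma taylor_fwd:
  fixes f :: "nat \<Rightarrow> real \<Rightarrow> real"
  assumes n: "0 < n"
    and der: "\<And>m t. m < n \<Longrightarrow> t \<in> {A..B} \<Longrightarrow> (f m has_real_derivative f (Suc m) t) (at t within {A..B})"
    and bnd: "\<And>t. t \<in> {A..B} \<Longrightarrow> \<bar>f n t\<bar> \<le> M"
    and ax: "A \<le> a" "a \<le> x" "x \<le> B"
  shows "\<bar>f 0 x - (\<Sum>i<n. (x - a)^i / fact i * f i a)\<bar> \<le> M * (x - a)^n / fact n"
proof -
  have der': "(f m has_vector_derivative f (Suc m) t) (at t within {a..x})"
    if "m < n" "a \<le> t" "t \<le> x" for m t
  proof -
    have "(f m has_real_derivative f (Suc m) t) (at t within {A..B})"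
      using der[of m t] that ax by auto
    then have "(f m has_real_derivative f (Suc m) t) (at t within {a..x})"
      by (rule DERIV_subset) (use ax in auto)
    then show ?thesis by (simp add: has_real_derivative_iff_has_vector_derivative)
  qed
  define i where "i = (\<lambda>t. ((x - t) ^ (n - 1) / fact (n - 1)) *\<^sub>R f n t)"
  have T: "f 0 x = (\<Sum>i<n. ((x - a) ^ i / fact i) *\<^sub>R f i a) + integral {a..x} i"
    and TI: "i integrable_on {a..x}"
    using Taylor_integral[where p=n and Df=f and f="f 0" and a=a and b=x] Taylor_integrable[where p=n and Df=f and f="f 0" and a=a and b=x] n der' ax
    unfolding i_def by auto
  have G: "((\<lambda>t. M * ((x - t) ^ (n - 1) / fact (n - 1))) has_integral
            ((\<lambda>t. - (M * (x - t) ^ n / fact n)) x - (\<lambda>t. - (M * (x - t) ^ n / fact n)) a)) {a..x}"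
  proof (rule fundamental_theorem_of_calculus_interior)
    show "a \<le> x" using ax by simp
    show "continuous_on {a..x} (\<lambda>t. - (M * (x - t) ^ n / fact n))"
      by (intro continuous_intros) auto
    fix t assume "t \<in> {a<..<x}"
    have "((\<lambda>t. - (M * (x - t) ^ n / fact n)) has_real_derivative
          M * ((x - t) ^ (n - 1) / fact (n - 1))) (at t)"
    proof -
      have "((\<lambda>t. - (M * (x - t) ^ n / fact n)) has_real_derivative
          - (M * (real n * (x - t) ^ (n - 1) * (-1)) / fact n)) (at t)"
        by (auto intro!: derivative_eq_intros)
      moreover have "- (M * (real n * (x - t) ^ (n - 1) * (-1)) / fact n) = M * ((x - t) ^ (n - 1) / fact (n - 1))"
      proof -
        have "fact n = real n * fact (n - 1)" using n
          by (cases n) auto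
        then show ?thesis using n by (simp add: field_simps)
      qed
      ultimately show ?thesis by simp
    qed
    then show "((\<lambda>t. - (M * (x - t) ^ n / fact n)) has_vector_derivative
          M * ((x - t) ^ (n - 1) / fact (n - 1))) (at t)"
      by (simp add: has_real_derivative_iff_has_vector_derivative)
  qed
  have "norm (integral {a..x} i) \<le> integral {a..x} (\<lambda>t. M * ((x - t) ^ (n - 1) / fact (n - 1)))"
  proof (rule integral_norm_bound_integral[OF TI])
    show "(\<lambda>t. M * ((x - t) ^ (n - 1) / fact (n - 1))) integrable_on {a..x}"
      using G by blast
    fix t assume t: "t \<in> {a..x}"
    have "\<bar>f n t\<bar> \<le> M" using bnd[of t] t ax by auto
    moreover have "0 \<le> (x - t) ^ (n - 1) / fact (n - 1)" using t by auto
    ultimately show "norm (i t) \<le> M * ((x - t) ^ (n - 1) / fact (n - 1))"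
    proof -
      have "norm (i t) = \<bar>f n t\<bar> * ((x - t) ^ (n - 1) / fact (n - 1))"
        unfolding i_def using t by (simp add: abs_mult)
      also have "\<dots> \<le> M * ((x - t) ^ (n - 1) / fact (n - 1))"
        by (rule mult_right_mono) fact+
      finally show ?thesis .
    qed
  qed
  also have "\<dots> = M * (x - a) ^ n / fact n"
    using integral_unique[OF G] n by simp
  finally have "\<bar>integral {a..x} i\<bar> \<le> M * (x - a) ^ n / fact n" by simp
  moreover have "f 0 x - (\<Sum>i<n. (x - a)^i / fact i * f i a) = integral {a..x} i"
    using T by simp
  ultimately show ?thesis by simp
qed

lemma taylor_both:
  fixes f :: "nat \<Rightarrow> real \<Rightarrow> real"
  assumes n: "0 < n"
    and der: "\<And>m t. m < n \<Longrightarrow> t \<in> {A..B} \<Longrightarrow> (f m has_real_derivative f (Suc m) t) (at t within {A..B})"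
    and bnd: "\<And>t. t \<in> {A..B} \<Longrightarrow> \<bar>f n t\<bar> \<le> M"
    and a: "a \<in> {A..B}" and x: "x \<in> {A..B}"
  shows "\<bar>f 0 x - (\<Sum>i<n. (x - a)^i / fact i * f i a)\<bar> \<le> M * \<bar>x - a\<bar>^n / fact n"
proof (cases "a \<le> x")
  case True
  have "\<bar>x - a\<bar> = x - a" using True by simp
  moreover have "\<bar>f 0 x - (\<Sum>i<n. (x - a)^i / fact i * f i a)\<bar> \<le> M * (x - a)^n / fact n"
    by (rule taylor_fwd[OF n der bnd]) (use a x True in auto)
  ultimately show ?thesis by simp
next
  case False
  define g where "g = (\<lambda>m t. (-1)^m * f m (-t))"
  have derg: "(g m has_real_derivative g (Suc m) t) (at t within {-B..-A})"
    if "m < n" "t \<in> {-B..-A}" for m t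
  proof -
    have "(f m has_real_derivative f (Suc m) (-t)) (at (-t) within {A..B})"
      using der[of m "-t"] that by auto
    moreover have "uminus ` {-B..-A} = {A..B::real}" by simp
    ultimately have "(f m has_real_derivative f (Suc m) (-t)) (at (uminus t) within (uminus ` {-B..-A}))"
      by simp
    from DERIV_image_chain[OF this DERIV_minus[OF DERIV_ident]]
    have "((f m \<circ> uminus) has_real_derivative f (Suc m) (-t) * (-1)) (at t within {-B..-A})" by simp
    then have "((\<lambda>t. f m (-t)) has_real_derivative f (Suc m) (-t) * (-1)) (at t within {-B..-A})"
      by (simp add: o_def)
    from DERIV_cmult[OF this, of "(-1)^m"]
    show ?thesis unfolding g_def by (simp add: algebra_simps)
  qed
  have bndg: "\<bar>g n t\<bar> \<le> M" if "t \<in> {-B..-A}" for t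
  proof -
    have "\<bar>g n t\<bar> = \<bar>f n (-t)\<bar>" unfolding g_def by (simp add: abs_mult)
    also have "\<dots> \<le> M" by (rule bnd) (use that in auto)
    finally show ?thesis .
  qed
  have T': "\<bar>g 0 (-x) - (\<Sum>i<n. (-x - -a)^i / fact i * g i (-a))\<bar> \<le> M * (-x - -a)^n / fact n"
    by (rule taylor_fwd[OF n derg bndg]) (use a x False in auto)
  have g0: "g 0 (-x) = f 0 x" unfolding g_def by simp
  have eqi: "(-x - -a)^i / fact i * g i (-a) = (x - a)^i / fact i * f i a" for i
  proof -
    have e: "(-x - -a) * (-1) = x - a" by simp
    have "(-x - -a)^i * (-1)^i = ((x - a))^i"
      unfolding e[symmetric] power_mult_distrib ..
    moreover have "(-x - -a)^i / fact i * g i (-a) = ((-x - -a)^i * (-1)^i) / fact i * f i a"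
      unfolding g_def by (simp add: field_simps)
    ultimately show ?thesis by (simp only:)
  qed
  have S: "(\<Sum>i<n. (-x - -a)^i / fact i * g i (-a)) = (\<Sum>i<n. (x - a)^i / fact i * f i a)"
    using eqi by (simp only:)
  have h: "-x - -a = \<bar>x - a\<bar>" using False by linarith
  show ?thesis using T' unfolding S g0 unfolding h .
qed

lemma kernel_has_integral:
  fixes K e a b :: real
  assumes e: "e > 0" and ab: "a \<le> b" and bK: "b \<le> K"
  shows "((\<lambda>x. (K - x) powr (e - 1)) has_integral ((K - a) powr e - (K - b) powr e) / e) {a..b}"
proof -
  have "((\<lambda>x. (K - x) powr (e - 1)) has_integral
        ((\<lambda>x. - ((K - x) powr e / e)) b - (\<lambda>x. - ((K - x) powr e / e)) a)) {a..b}"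
  proof (rule fundamental_theorem_of_calculus_interior[OF ab])
    show "continuous_on {a..b} (\<lambda>x. - ((K - x) powr e / e))"
      by (intro continuous_intros continuous_on_powr') (use e bK in auto)
    fix x assume x: "x \<in> {a<..<b}"
    then have Kx: "K - x > 0" using bK by auto
    have "((\<lambda>x. - ((K - x) powr e / e)) has_real_derivative
          - ((e * (K - x) powr (e - 1) * (0 - 1)) / e)) (at x)"
      using Kx by (auto intro!: derivative_eq_intros)
    moreover have "- ((e * (K - x) powr (e - 1) * (0 - 1)) / e) = (K - x) powr (e - 1)"
      using e by simp
    ultimately show "((\<lambda>x. - ((K - x) powr e / e)) has_vector_derivative (K - x) powr (e - 1)) (at x)"
      by (simp add: has_real_derivative_iff_has_vector_derivative)
  qed
  then show ?thesis by (simp add: diff_divide_distrib)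
qed

lemma kernel_integrable:
  fixes K \<beta> a b :: real
  assumes "\<beta> > -1" "a \<le> b" "b \<le> K"
  shows "(\<lambda>x. (K - x) powr \<beta>) integrable_on {a..b}"
  using kernel_has_integral[of "\<beta> + 1" a b K] assms by auto

lemma kernel_integral:
  fixes K \<beta> a b :: real
  assumes "\<beta> > -1" "a \<le> b" "b \<le> K"
  shows "integral {a..b} (\<lambda>x. (K - x) powr \<beta>) = ((K - a) powr (\<beta> + 1) - (K - b) powr (\<beta> + 1)) / (\<beta> + 1)"
  using kernel_has_integral[of "\<beta> + 1" a b K] assms by (auto intro: integral_unique)

lemma kernel_prod_integrable:
  fixes K \<beta> a b :: real and h :: "real \<Rightarrow> real"
  assumes "\<beta> > -1" "a \<le> b" "b \<le> K" and h: "continuous_on {a..b} h"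
  shows "(\<lambda>x. h x * (K - x) powr \<beta>) integrable_on {a..b}"
proof -
  have "(\<lambda>x. (K - x) powr \<beta>) absolutely_integrable_on {a..b}"
    by (rule nonnegative_absolutely_integrable_1[OF kernel_integrable[OF assms(1-3)]]) auto
  moreover have "h \<in> borel_measurable (lebesgue_on {a..b})"
    by (rule continuous_imp_measurable_on_sets_lebesgue[OF h]) auto
  moreover have "bounded (h ` {a..b})"
    by (rule compact_imp_bounded[OF compact_continuous_image[OF h]]) auto
  ultimately have "(\<lambda>x. h x * (K - x) powr \<beta>) absolutely_integrable_on {a..b}"
    by (intro absolutely_integrable_bounded_measurable_product_real) auto
  then show ?thesis using absolutely_integrable_on_def by blast
qed

lemma integral_translate:
  fixes F :: "real \<Rightarrow> real"
  assumes "F integrable_on {c..d + c}"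
  shows "integral {0..d} (\<lambda>s. F (s + c)) = integral {c..d + c} F"
proof -
  obtain I where I: "(F has_integral I) {c..d + c}" using assms by blast
  from has_integral_affinity'[of F I c "d + c" 1 c] I
  have "((\<lambda>x. F (x + c)) has_integral I) {0..d}" by simp
  then show ?thesis using I by (simp add: integral_unique)
qed

lemma integral_split_pieces:
  fixes f :: "real \<Rightarrow> real"
  assumes "1 \<le> m" "f integrable_on {0..real m - 1/2}"
  shows "integral {0..real m - 1/2} f = integral {0..1/2} f + (\<Sum>l=2..m. integral {real l - 3/2..real l - 1/2} f)"
  using assms
proof (induction m rule: nat_induct_at_least)
  case base
  then show ?case by simp
next
  case (Suc m)
  have fi: "f integrable_on {0..real m + 1/2}" using Suc.prems by (simp add: add.commute)
  have "f integrable_on {0..real m - 1/2}"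
    by (rule integrable_subinterval_real[OF fi]) auto
  then have IH: "integral {0..real m - 1/2} f = integral {0..1/2} f + (\<Sum>l=2..m. integral {real l - 3/2..real l - 1/2} f)"
    using Suc.IH by simp
  have "integral {0..real m - 1/2} f + integral {real m - 1/2..real m + 1/2} f = integral {0..real m + 1/2} f"
    by (rule Henstock_Kurzweil_Integration.integral_combine[OF _ _ fi]) (use Suc.hyps in auto)
  moreover have "(\<Sum>l=2..Suc m. integral {real l - 3/2..real l - 1/2} f)
      = (\<Sum>l=2..m. integral {real l - 3/2..real l - 1/2} f) + integral {real m - 1/2..real m + 1/2} f"
    using Suc.hyps by (simp add: sum.cl_ivl_Suc add.commute)
  moreover have eq: "real (Suc m) - 1/2 = real m + 1/2" by simp
  ultimately show ?case using IH unfolding eq by linarith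
qed

lemma sum_reorg:
  fixes A B d :: "nat \<Rightarrow> real" and C :: real
  assumes k: "1 \<le> k"
  shows "(\<Sum>l=0..k. (if l = k then C else A (k - l) + B (k - l)) * d (k - l))
       = C * d 0 + A 1 * d 1 + (\<Sum>l=2..k. A l * d l + B (l - 1) * d (l - 1)) + B k * d k"
proof -
  have s1: "(\<Sum>l=0..k. (if l = k then C else A (k - l) + B (k - l)) * d (k - l))
      = (\<Sum>l=0..<k. (A (k - l) + B (k - l)) * d (k - l)) + C * d 0"
  proof -
    have "(\<Sum>l=0..k. (if l = k then C else A (k - l) + B (k - l)) * d (k - l))
        = (\<Sum>l=0..<k. (if l = k then C else A (k - l) + B (k - l)) * d (k - l)) + C * d 0"
      by (simp add: atLeastLessThanSuc_atLeastAtMost[symmetric])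
    moreover have "(\<Sum>l=0..<k. (if l = k then C else A (k - l) + B (k - l)) * d (k - l))
        = (\<Sum>l=0..<k. (A (k - l) + B (k - l)) * d (k - l))"
      by (rule sum.cong) auto
    ultimately show ?thesis by simp
  qed
  have s2: "(\<Sum>l=0..<k. (A (k - l) + B (k - l)) * d (k - l)) = (\<Sum>j=1..k. (A j + B j) * d j)"
    by (rule sum.reindex_bij_witness[where i="\<lambda>j. k - j" and j="\<lambda>l. k - l"]) auto
  have s3: "(\<Sum>j=1..k. (A j + B j) * d j) = (\<Sum>j=1..k. A j * d j) + (\<Sum>j=1..k. B j * d j)"
    by (simp add: distrib_right sum.distrib)
  have s4: "(\<Sum>j=1..k. A j * d j) = A 1 * d 1 + (\<Sum>j=2..k. A j * d j)"
    using k by (simp add: sum.atLeast_Suc_atMost numeral_2_eq_2)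
  obtain k' where k': "k = Suc k'" using k by (cases k) auto
  have s5: "(\<Sum>j=1..k. B j * d j) = (\<Sum>l=2..k. B (l - 1) * d (l - 1)) + B k * d k"
  proof -
    have "(\<Sum>j=1..k. B j * d j) = (\<Sum>j=1..k'. B j * d j) + B k * d k"
      unfolding k' by (simp add: sum.cl_ivl_Suc)
    moreover have "(\<Sum>l=2..k. B (l - 1) * d (l - 1)) = (\<Sum>j=1..k'. B j * d j)"
      unfolding k' numeral_2_eq_2 sum.shift_bounds_cl_Suc_ivl by simp
    ultimately show ?thesis by simp
  qed
  show ?thesis using s1 s2 s3 s4 s5 by (simp add: sum.distrib)
qed

lemma d2_alg:
  fixes P0 P1 Pm A B C R \<tau> :: real
  assumes tp: "\<tau> > 0"
    and h1: "\<bar>P1 - (P0 + \<tau> * A + \<tau>^2 / 2 * B + \<tau>^3 / 6 * C)\<bar> \<le> R"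
    and h2: "\<bar>Pm - (P0 - \<tau> * A + \<tau>^2 / 2 * B - \<tau>^3 / 6 * C)\<bar> \<le> R"
  shows "\<bar>((P1 - P0) / \<tau> - (P0 - Pm) / \<tau>) / \<tau> - B\<bar> \<le> 2 * R / \<tau>^2"
proof -
  define X where "X = P1 - (P0 + \<tau> * A + \<tau>^2 / 2 * B + \<tau>^3 / 6 * C)"
  define Y where "Y = Pm - (P0 - \<tau> * A + \<tau>^2 / 2 * B - \<tau>^3 / 6 * C)"
  have "((P1 - P0) / \<tau> - (P0 - Pm) / \<tau>) / \<tau> - B = (X + Y) / \<tau>^2"
    using tp unfolding X_def Y_def by (simp add: field_simps power2_eq_square power3_eq_cube)
  also have "\<bar>(X + Y) / \<tau>^2\<bar> = \<bar>X + Y\<bar> / \<tau>^2"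
    by (simp add: abs_divide)
  also have "\<dots> \<le> 2 * R / \<tau>^2"
  proof (rule divide_right_mono)
    have "\<bar>X + Y\<bar> \<le> \<bar>X\<bar> + \<bar>Y\<bar>" by (rule abs_triangle_ineq)
    then show "\<bar>X + Y\<bar> \<le> 2 * R" using h1 h2 unfolding X_def Y_def by linarith
  qed simp
  finally show ?thesis .
qed

lemma d0_alg:
  fixes P0 P1 A B C R \<tau> :: real
  assumes tp: "\<tau> > 0"
    and h1: "\<bar>P1 - (P0 + \<tau> * A + \<tau>^2 / 2 * B + \<tau>^3 / 6 * C)\<bar> \<le> R"
  shows "\<bar>2 / \<tau> * ((P1 - P0) / \<tau> - A) - (B + \<tau> / 3 * C)\<bar> \<le> 2 * R / \<tau>^2"
proof -
  define X where "X = P1 - (P0 + \<tau> * A + \<tau>^2 / 2 * B + \<tau>^3 / 6 * C)"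
  have "2 / \<tau> * ((P1 - P0) / \<tau> - A) - (B + \<tau> / 3 * C) = 2 * X / \<tau>^2"
    using tp unfolding X_def by (simp add: field_simps power2_eq_square power3_eq_cube)
  also have "\<bar>2 * X / \<tau>^2\<bar> = 2 * \<bar>X\<bar> / \<tau>^2"
    by (simp add: abs_divide abs_mult)
  also have "\<dots> \<le> 2 * R / \<tau>^2"
    by (rule divide_right_mono) (use h1 X_def in auto)
  finally show ?thesis .
qed

lemma abs_mul_le:
  fixes u v U V :: real
  assumes "\<bar>u\<bar> \<le> U" "\<bar>v\<bar> \<le> V"
  shows "\<bar>u * v\<bar> \<le> U * V"
  unfolding abs_mult by (rule mult_mono) (use assms in auto)

lemma B1_alg:
  fixes x r e0 e1 q R :: real
  assumes x: "0 \<le> x" "x \<le> 1/2"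
    and hr: "\<bar>r\<bar> \<le> R / 8" and h0: "\<bar>e0\<bar> \<le> R / 12" and h1: "\<bar>e1\<bar> \<le> R / 12" and hq: "\<bar>q\<bar> \<le> R / 2"
  shows "\<bar>r - 3/2 * ((1 - x) * e0) - 3/2 * ((x - 1/3) * e1) - 3/2 * ((x - 1/3) * q)\<bar> \<le> 13/24 * R"
proof -
  have a: "\<bar>(1 - x) * e0\<bar> \<le> 1 * (R / 12)" by (rule abs_mul_le) (use x h0 in auto)
  have b: "\<bar>(x - 1/3) * e1\<bar> \<le> 1/3 * (R / 12)" by (rule abs_mul_le) (use x h1 in \<open>auto simp: abs_if\<close>)
  have c: "\<bar>(x - 1/3) * q\<bar> \<le> 1/3 * (R / 2)" by (rule abs_mul_le) (use x hq in \<open>auto simp: abs_if\<close>)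
  show ?thesis using a b c hr unfolding abs_le_iff by linarith
qed

lemma Bl_alg:
  fixes x l r e0 e1 q R :: real
  assumes x: "l - 3/2 \<le> x" "x \<le> l - 1/2"
    and hr: "\<bar>r\<bar> \<le> R / 8" and h0: "\<bar>e0\<bar> \<le> R / 12" and h1: "\<bar>e1\<bar> \<le> R / 12" and hq: "\<bar>q\<bar> \<le> R / 2"
  shows "\<bar>r - ((l - x) * e0) - ((x - l + 1) * e1) - ((x - l + 1) * q)\<bar> \<le> 13/24 * R"
proof -
  have a: "\<bar>(l - x) * e0\<bar> \<le> 3/2 * (R / 12)" by (rule abs_mul_le) (use x h0 in auto)
  have b: "\<bar>(x - l + 1) * e1\<bar> \<le> 1/2 * (R / 12)" by (rule abs_mul_le) (use x h1 in \<open>auto simp: abs_if\<close>)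
  have c: "\<bar>(x - l + 1) * q\<bar> \<le> 1/2 * (R / 2)" by (rule abs_mul_le) (use x hq in \<open>auto simp: abs_if\<close>)
  show ?thesis using a b c hr unfolding abs_le_iff by linarith
qed

lemma final_alg:
  fixes G s2 tt M \<tau> Kp hq X :: real
  assumes G: "G > 0" and s2: "s2 > 0" and tt: "tt > 0" and M: "M \<ge> 0"
    and hK: "hq \<le> Kp"
    and X: "\<bar>X\<bar> \<le> 13/24 * (M * \<tau>^2) * ((Kp - hq) / s2) + 5/24 * (M * \<tau>^2) * (hq / s2)"
  shows "\<bar>1 / G * tt * X\<bar> \<le> 1 / (s2 * G) * M * (5 * (tt * Kp) / 6 * \<tau>^2 - 5 / 8 * hq * (tt * \<tau>^2))"
proof -
  have "\<bar>1 / G * tt * X\<bar> = (tt / G) * \<bar>X\<bar>" using G tt by (simp add: abs_mult)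
  also have "\<dots> \<le> (tt / G) * (13/24 * (M * \<tau>^2) * ((Kp - hq) / s2) + 5/24 * (M * \<tau>^2) * (hq / s2))"
    by (rule mult_left_mono[OF X]) (use G tt in auto)
  also have "\<dots> = 1 / (s2 * G) * M * (5 * (tt * Kp) / 6 * \<tau>^2 - 5 / 8 * hq * (tt * \<tau>^2))
        - (tt * M * \<tau>^2 / (s2 * G)) * (7/24 * (Kp - hq))"
    using G s2 by (simp add: field_simps)
  also have "\<dots> \<le> 1 / (s2 * G) * M * (5 * (tt * Kp) / 6 * \<tau>^2 - 5 / 8 * hq * (tt * \<tau>^2))"
  proof -
    have "0 \<le> (tt * M * \<tau>^2 / (s2 * G)) * (7/24 * (Kp - hq))"
      using G s2 tt M hK by (intro mult_nonneg_nonneg divide_nonneg_pos) auto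
    then show ?thesis by linarith
  qed
  finally show ?thesis .
qed

lemma lin2:
  fixes u v w :: "real \<Rightarrow> real"
  assumes "(\<lambda>x. u x * w x) integrable_on A" "(\<lambda>x. v x * w x) integrable_on A"
  shows "integral A (\<lambda>x. (c1 * u x + c2 * v x) * w x)
       = c1 * integral A (\<lambda>x. u x * w x) + c2 * integral A (\<lambda>x. v x * w x)"
proof -
  have "((\<lambda>x. c1 * (u x * w x) + c2 * (v x * w x)) has_integral
        c1 * integral A (\<lambda>x. u x * w x) + c2 * integral A (\<lambda>x. v x * w x)) A"
    by (intro has_integral_add has_integral_mult_right integrable_integral assms)
  moreover have "(\<lambda>x. c1 * (u x * w x) + c2 * (v x * w x)) = (\<lambda>x. (c1 * u x + c2 * v x) * w x)"
    by (simp add: fun_eq_iff algebra_simps)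
  ultimately show ?thesis by (simp add: integral_unique)
qed

theorem theorem1:
  fixes \<alpha> \<sigma> T \<tau> :: real and N k :: nat
    and p :: "real \<Rightarrow> real" and D :: "nat \<Rightarrow> real \<Rightarrow> real"
  assumes "1 < \<alpha>" "\<alpha> < 2" "\<sigma> = 1 - \<alpha> / 2" "T > 0" "N > 0" "\<tau> = T / real N"
    and "1 \<le> k" "k \<le> N - 1"
    and "D 0 = p"
    and "\<And>m t. m < 4 \<Longrightarrow> t \<in> {0..real (k+1) * \<tau>} \<Longrightarrow>
           (D m has_real_derivative D (Suc m) t) (at t within {0..real (k+1) * \<tau>})"
    and "continuous_on {0..real (k+1) * \<tau>} (D 4)"
  shows "\<bar>caputo \<alpha> (D 2) (real k * \<tau> + \<sigma> * \<tau>)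
           - (1 / Gamma (2 - \<alpha>)) * (\<Sum>l=0..k. coef_c \<alpha> \<sigma> \<tau> k l * delta2 \<tau> p (D 1) (k - l))\<bar>
         \<le> (1 / Gamma (3 - \<alpha>)) * (SUP t\<in>{0..real (k+1) * \<tau>}. \<bar>D 4 t\<bar>) *
            (5 * (real k * \<tau> + \<sigma> * \<tau>) powr (2 - \<alpha>) / 6 * \<tau>^2
             - 5 / 8 * (\<sigma> + 1/2) powr (2 - \<alpha>) * \<tau> powr (4 - \<alpha>))"
proof -
  note a1 = assms(1) and a2 = assms(2) and sg = assms(3) and T0 = assms(4) and N0 = assms(5)
    and tau = assms(6) and k1 = assms(7) and D0 = assms(9) and der = assms(10) and c4 = assms(11)
  have tp: "\<tau> > 0" using tau T0 N0 by simp
  define S where "S = {0..real (k+1) * \<tau>}"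
  define M where "M = (SUP t\<in>S. \<bar>D 4 t\<bar>)"
  have "compact ((\<lambda>t. \<bar>D 4 t\<bar>) ` S)"
    unfolding S_def by (intro compact_continuous_image continuous_intros c4) auto
  then have bdd: "bdd_above ((\<lambda>t. \<bar>D 4 t\<bar>) ` S)"
    by (simp add: bounded_imp_bdd_above compact_imp_bounded)
  have Mb: "\<bar>D 4 t\<bar> \<le> M" if "t \<in> S" for t
    unfolding M_def by (rule cSUP_upper[OF that bdd])
  have M0: "0 \<le> M" using Mb[of 0] tp unfolding S_def by force
  have inS: "t \<in> S \<longleftrightarrow> 0 \<le> t \<and> t \<le> real (k+1) * \<tau>" for t unfolding S_def by simp
  define \<beta> where "\<beta> = 1 - \<alpha>"
  define K where "K = real k + \<sigma>"
  define h where "h = \<sigma> + 1/2"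
  have sg0: "0 < \<sigma>" "\<sigma> < 1/2" using sg a1 a2 by auto
  have b1: "\<beta> > -1" "\<beta> + 1 = 2 * \<sigma>" using a2 sg unfolding \<beta>_def by auto
  have T2: "\<bar>D 2 y - (D 2 a + (y - a) * D 3 a)\<bar> \<le> M * (y - a)^2 / 2" if "a \<in> S" "y \<in> S" for a y
  proof -
    have "\<bar>(\<lambda>m. D (m + 2)) 0 y - (\<Sum>i<2. (y - a)^i / fact i * (\<lambda>m. D (m + 2)) i a)\<bar>
          \<le> M * \<bar>y - a\<bar>^2 / fact 2"
    proof (rule taylor_both[where A=0 and B="real (k+1) * \<tau>"])
      show "((\<lambda>m. D (m + 2)) m has_real_derivative (\<lambda>m. D (m + 2)) (Suc m) t)
            (at t within {0..real (k + 1) * \<tau>})" if "m < 2" "t \<in> {0..real (k + 1) * \<tau>}" for m t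
        using der[of "m + 2" t] that by simp
      show "\<bar>(\<lambda>m. D (m + 2)) 2 t\<bar> \<le> M" if "t \<in> {0..real (k + 1) * \<tau>}" for t
        using Mb[of t] that unfolding S_def by simp
    qed (use that in \<open>auto simp: S_def\<close>)
    then show ?thesis by (simp add: eval_nat_numeral)
  qed
  have T4: "\<bar>p y - (p a + (y - a) * D 1 a + (y - a)^2 / 2 * D 2 a + (y - a)^3 / 6 * D 3 a)\<bar>
      \<le> M * (y - a)^4 / 24" if "a \<in> S" "y \<in> S" for a y
  proof -
    have "\<bar>D 0 y - (\<Sum>i<4. (y - a)^i / fact i * D i a)\<bar> \<le> M * \<bar>y - a\<bar>^4 / fact 4"
    proof (rule taylor_both[where A=0 and B="real (k+1) * \<tau>"])
      show "(D m has_real_derivative D (Suc m) t)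
            (at t within {0..real (k + 1) * \<tau>})" if "m < 4" "t \<in> {0..real (k + 1) * \<tau>}" for m t
        using der[of m t] that by simp
      show "\<bar>D 4 t\<bar> \<le> M" if "t \<in> {0..real (k + 1) * \<tau>}" for t
        using Mb[of t] that unfolding S_def by simp
    qed (use that in \<open>auto simp: S_def\<close>)
    then show ?thesis using D0 by (simp add: eval_nat_numeral fact_numeral)
  qed
  have E: "\<bar>delta2 \<tau> p (D 1) j - D 2 (real j * \<tau>)\<bar> \<le> M * \<tau>^2 / 12"
    if j1: "1 \<le> j" and jk: "j \<le> k" for j
  proof -
    define a where "a = real j * \<tau>"
    have aS: "a \<in> S" "a + \<tau> \<in> S" "a - \<tau> \<in> S"
    proof -
      have f1: "1 * \<tau> \<le> real j * \<tau>" using j1 tp by (intro mult_right_mono) auto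
      have f2: "real j * \<tau> \<le> real k * \<tau>" using jk tp by (intro mult_right_mono) auto
      have f3: "real (k+1) * \<tau> = real k * \<tau> + \<tau>" by (simp add: distrib_right)
      show "a \<in> S" "a + \<tau> \<in> S" "a - \<tau> \<in> S"
        unfolding inS a_def using f1 f2 f3 tp by (intro conjI; linarith)+
    qed
    have Tp: "\<bar>p (a + \<tau>) - (p a + \<tau> * D 1 a + \<tau>^2 / 2 * D 2 a + \<tau>^3 / 6 * D 3 a)\<bar> \<le> M * \<tau>^4 / 24"
      using T4[OF aS(1) aS(2)] by simp
    have Tm: "\<bar>p (a - \<tau>) - (p a - \<tau> * D 1 a + \<tau>^2 / 2 * D 2 a - \<tau>^3 / 6 * D 3 a)\<bar> \<le> M * \<tau>^4 / 24"
    proof -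
      have e: "a - \<tau> - a = - \<tau>" by simp
      show ?thesis using T4[OF aS(1) aS(3)] unfolding e by simp
    qed
    have dj: "delta2 \<tau> p (D 1) j = ((p (a + \<tau>) - p a) / \<tau> - (p a - p (a - \<tau>)) / \<tau>) / \<tau>"
    proof -
      have "real (j + 1) * \<tau> = a + \<tau>" "real (j - 1) * \<tau> = a - \<tau>"
        using j1 unfolding a_def by (auto simp: algebra_simps of_nat_diff)
      then show ?thesis using j1 unfolding delta2_def a_def by simp
    qed
    have "\<bar>delta2 \<tau> p (D 1) j - D 2 a\<bar> \<le> 2 * (M * \<tau>^4 / 24) / \<tau>^2"
      unfolding dj by (rule d2_alg[OF tp Tp Tm])
    also have "\<dots> = M * \<tau>^2 / 12" using tp by (simp add: field_simps power2_eq_square power4_eq_xxxx)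
    finally show ?thesis unfolding a_def .
  qed
  have E0: "\<bar>delta2 \<tau> p (D 1) 0 - (D 2 0 + \<tau> / 3 * D 3 0)\<bar> \<le> M * \<tau>^2 / 12"
  proof -
    have S0: "0 \<in> S" "\<tau> \<in> S" unfolding inS using tp k1 by auto
    have Tp: "\<bar>p \<tau> - (p 0 + \<tau> * D 1 0 + \<tau>^2 / 2 * D 2 0 + \<tau>^3 / 6 * D 3 0)\<bar> \<le> M * \<tau>^4 / 24"
      using T4[OF S0(1) S0(2)] by simp
    have "\<bar>delta2 \<tau> p (D 1) 0 - (D 2 0 + \<tau> / 3 * D 3 0)\<bar> \<le> 2 * (M * \<tau>^4 / 24) / \<tau>^2"
    proof -
      have "delta2 \<tau> p (D 1) 0 = 2 / \<tau> * ((p \<tau> - p 0) / \<tau> - D 1 0)" by (simp add: delta2_def)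
      then show ?thesis using d0_alg[OF tp Tp] by simp
    qed
    also have "\<dots> = M * \<tau>^2 / 12" using tp by (simp add: field_simps power2_eq_square power4_eq_xxxx)
    finally show ?thesis .
  qed
  define d where "d = delta2 \<tau> p (D 1)"
  have Ed: "\<bar>d j - D 2 (real j * \<tau>)\<bar> \<le> M * \<tau>^2 / 12" if "1 \<le> j" "j \<le> k" for j
    using E[OF that] unfolding d_def .
  have E0d: "\<bar>d 0 - (D 2 0 + \<tau> / 3 * D 3 0)\<bar> \<le> M * \<tau>^2 / 12"
    using E0 unfolding d_def .
  have memS: "\<tau> * y \<in> S" if "0 \<le> y" "y \<le> real k + 1" for y
  proof -
    have "\<tau> * y \<le> \<tau> * (real k + 1)" using that tp by (intro mult_left_mono) auto
    then show ?thesis unfolding inS using that tp by (simp add: mult.commute)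
  qed
  have sqb: "M * (y - a)^2 / 2 \<le> M * \<tau>^2 / 8" if "\<bar>y - a\<bar> \<le> \<tau> / 2" for y a
  proof -
    have "(y - a)^2 = \<bar>y - a\<bar>^2" by simp
    also have "\<dots> \<le> (\<tau> / 2)^2" by (rule power_mono) (use that in auto)
    finally have "(y - a)^2 \<le> (\<tau> / 2)^2" .
    then have "M * (y - a)^2 \<le> M * (\<tau> / 2)^2" using M0 by (rule mult_left_mono)
    then show ?thesis by (simp add: power_divide)
  qed
  have B1: "\<bar>D 2 (\<tau> * x) - (3/2 * (1 - x) * d 0 + 3/2 * (x - 1/3) * d 1)\<bar> \<le> 13/24 * (M * \<tau>^2)"
    if x: "0 \<le> x" "x \<le> 1/2" for x
  proof -
    have S0: "0 \<in> S" "\<tau> * x \<in> S" "\<tau> \<in> S" using memS[of 0] memS[of x] memS[of 1] x by auto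
    have hr: "\<bar>D 2 (\<tau> * x) - (D 2 0 + (\<tau> * x - 0) * D 3 0)\<bar> \<le> M * \<tau>^2 / 8"
      using T2[OF S0(1) S0(2)] sqb[of "\<tau> * x" 0] x tp by (auto simp: abs_mult)
    have hq: "\<bar>D 2 \<tau> - (D 2 0 + (\<tau> - 0) * D 3 0)\<bar> \<le> M * \<tau>^2 / 2"
      using T2[OF S0(1) S0(3)] by simp
    have h1: "\<bar>d 1 - D 2 \<tau>\<bar> \<le> M * \<tau>^2 / 12" using Ed[of 1] k1 by simp
    have "D 2 (\<tau> * x) - (3/2 * (1 - x) * d 0 + 3/2 * (x - 1/3) * d 1)
      = (D 2 (\<tau> * x) - (D 2 0 + (\<tau> * x - 0) * D 3 0))
        - 3/2 * ((1 - x) * (d 0 - (D 2 0 + \<tau> / 3 * D 3 0)))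
        - 3/2 * ((x - 1/3) * (d 1 - D 2 \<tau>))
        - 3/2 * ((x - 1/3) * (D 2 \<tau> - (D 2 0 + (\<tau> - 0) * D 3 0)))"
      by (simp add: field_simps)
    also have "\<bar>\<dots>\<bar> \<le> 13/24 * (M * \<tau>^2)"
      by (rule B1_alg[OF x]) (use hr E0d h1 hq in auto)
    finally show ?thesis .
  qed
  have Bl: "\<bar>D 2 (\<tau> * x) - ((real l - x) * d (l - 1) + (x - real l + 1) * d l)\<bar> \<le> 13/24 * (M * \<tau>^2)"
    if l: "2 \<le> l" "l \<le> k" and x: "real l - 3/2 \<le> x" "x \<le> real l - 1/2" for l x
  proof -
    define a where "a = (real l - 1) * \<tau>"
    have lk: "real l \<le> real k" using l by simp
    have l2: "2 \<le> real l" using l by simp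
    have S0: "a \<in> S" "\<tau> * x \<in> S" "real l * \<tau> \<in> S"
      using memS[of "real l - 1"] memS[of x] memS[of "real l"] x lk l2 unfolding a_def
      by (auto simp: mult.commute)
    have hr: "\<bar>D 2 (\<tau> * x) - (D 2 a + (\<tau> * x - a) * D 3 a)\<bar> \<le> M * \<tau>^2 / 8"
    proof -
      have "\<tau> * x - a = \<tau> * (x - (real l - 1))" unfolding a_def by (simp add: algebra_simps)
      then have "\<bar>\<tau> * x - a\<bar> = \<tau> * \<bar>x - (real l - 1)\<bar>" using tp by (simp add: abs_mult)
      also have "\<dots> \<le> \<tau> * (1/2)" using x tp by (intro mult_left_mono) (auto simp: abs_if)
      finally have "\<bar>\<tau> * x - a\<bar> \<le> \<tau> / 2" by simp
      then show ?thesis using T2[OF S0(1) S0(2)] sqb[of "\<tau> * x" a] by linarith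
    qed
    have hq: "\<bar>D 2 (real l * \<tau>) - (D 2 a + (real l * \<tau> - a) * D 3 a)\<bar> \<le> M * \<tau>^2 / 2"
    proof -
      have "real l * \<tau> - a = \<tau>" unfolding a_def by (simp add: algebra_simps)
      then show ?thesis using T2[OF S0(1) S0(3)] by simp
    qed
    have h0: "\<bar>d (l - 1) - D 2 a\<bar> \<le> M * \<tau>^2 / 12"
      using Ed[of "l - 1"] l unfolding a_def by (simp add: of_nat_diff)
    have h1: "\<bar>d l - D 2 (real l * \<tau>)\<bar> \<le> M * \<tau>^2 / 12" using Ed[of l] l by simp
    have "D 2 (\<tau> * x) - ((real l - x) * d (l - 1) + (x - real l + 1) * d l)
      = (D 2 (\<tau> * x) - (D 2 a + (\<tau> * x - a) * D 3 a))
        - ((real l - x) * (d (l - 1) - D 2 a))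
        - ((x - real l + 1) * (d l - D 2 (real l * \<tau>)))
        - ((x - real l + 1) * (D 2 (real l * \<tau>) - (D 2 a + (real l * \<tau> - a) * D 3 a)))"
      unfolding a_def by (simp add: field_simps)
    also have "\<bar>\<dots>\<bar> \<le> 13/24 * (M * \<tau>^2)"
      by (rule Bl_alg[OF x]) (use hr h0 h1 hq in auto)
    finally show ?thesis .
  qed
  have BK: "\<bar>D 2 (\<tau> * x) - d k - \<tau> * (x - real k) * D 3 (real k * \<tau>)\<bar> \<le> 5/24 * (M * \<tau>^2)"
    if x: "real k - 1/2 \<le> x" "x \<le> real k + \<sigma>" for x
  proof -
    define a where "a = real k * \<tau>"
    have S0: "a \<in> S" "\<tau> * x \<in> S"
      using memS[of "real k"] memS[of x] x sg0 k1 unfolding a_def by (auto simp: mult.commute)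
    have hr: "\<bar>D 2 (\<tau> * x) - (D 2 a + (\<tau> * x - a) * D 3 a)\<bar> \<le> M * \<tau>^2 / 8"
    proof -
      have "\<tau> * x - a = \<tau> * (x - real k)" unfolding a_def by (simp add: algebra_simps)
      then have "\<bar>\<tau> * x - a\<bar> = \<tau> * \<bar>x - real k\<bar>" using tp by (simp add: abs_mult)
      also have "\<dots> \<le> \<tau> * (1/2)" using x tp sg0 by (intro mult_left_mono) (auto simp: abs_if)
      finally have "\<bar>\<tau> * x - a\<bar> \<le> \<tau> / 2" by simp
      then show ?thesis using T2[OF S0(1) S0(2)] sqb[of "\<tau> * x" a] by linarith
    qed
    have h0: "\<bar>d k - D 2 a\<bar> \<le> M * \<tau>^2 / 12" using Ed[of k] k1 unfolding a_def by simp
    have "D 2 (\<tau> * x) - d k - \<tau> * (x - real k) * D 3 (real k * \<tau>)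
       = (D 2 (\<tau> * x) - (D 2 a + (\<tau> * x - a) * D 3 a)) - (d k - D 2 a)"
      unfolding a_def by (simp add: field_simps)
    then show ?thesis using hr h0 unfolding abs_le_iff by linarith
  qed
  define W where "W = (\<lambda>x. (K - x) powr \<beta>)"
  have W0: "0 \<le> W x" for x unfolding W_def by simp
  have Kb: "real k - 1/2 \<le> K" "K \<le> real k + 1" "1/2 \<le> real k - 1/2" "0 \<le> K"
    using sg0 k1 unfolding K_def by auto
  have contD2: "continuous_on S (D 2)"
    by (rule DERIV_continuous_on[where D="D 3"]) (use der[of 2] in \<open>auto simp: S_def\<close>)
  have contg: "continuous_on {a..b} (\<lambda>x. D 2 (\<tau> * x))" if "0 \<le> a" "b \<le> real k + 1" for a b
  proof (rule continuous_on_compose2[OF contD2, where f="\<lambda>x. \<tau> * x"])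
    show "continuous_on {a..b} (\<lambda>x. \<tau> * x)" by (intro continuous_intros)
    show "(\<lambda>x. \<tau> * x) ` {a..b} \<subseteq> S" using memS that by auto
  qed
  have intW: "(\<lambda>x. u x * W x) integrable_on {a..b}"
    if "a \<le> b" "b \<le> K" "continuous_on {a..b} u" for u a b
    unfolding W_def by (rule kernel_prod_integrable) (use that b1 in auto)
  have intW1: "W integrable_on {a..b}" if "a \<le> b" "b \<le> K" for a b
    unfolding W_def by (rule kernel_integrable) (use that b1 in auto)
  have intWg: "(\<lambda>x. D 2 (\<tau> * x) * W x) integrable_on {a..b}" if "0 \<le> a" "a \<le> b" "b \<le> K" for a b
    by (rule intW) (use that Kb contg in auto)
  have bound_int: "\<bar>integral {a..b} (\<lambda>x. u x * W x)\<bar> \<le> B * integral {a..b} W"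
    if "a \<le> b" "b \<le> K" "(\<lambda>x. u x * W x) integrable_on {a..b}" "\<And>x. x \<in> {a..b} \<Longrightarrow> \<bar>u x\<bar> \<le> B"
    for u a b B
  proof -
    have "norm (integral {a..b} (\<lambda>x. u x * W x)) \<le> integral {a..b} (\<lambda>x. B * W x)"
    proof (rule integral_norm_bound_integral[OF that(3)])
      show "(\<lambda>x. B * W x) integrable_on {a..b}"
        by (rule integrable_on_mult_right[OF intW1[OF that(1,2)]])
      fix x assume x: "x \<in> {a..b}"
      show "norm (u x * W x) \<le> B * W x"
        using mult_right_mono[OF that(4)[OF x] W0[of x]] W0[of x] by (simp add: abs_mult)
    qed
    then show ?thesis by simp
  qed
  have zeroK: "integral {real k - 1/2..K} (\<lambda>x. (x - real k) * W x) = 0"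
  proof -
    have eq: "(x - real k) * W x = \<sigma> * (K - x) powr (2 * \<sigma> - 1) - (K - x) powr (2 * \<sigma> + 1 - 1)"
      if "x \<in> {real k - 1/2..K}" for x
    proof -
      have bb: "\<beta> = 2 * \<sigma> - 1" using b1 by simp
      have "(K - x) * (K - x) powr \<beta> = (K - x) powr (\<beta> + 1)"
      proof (cases "K - x = 0")
        case True then show ?thesis by simp
      next
        case False
        then have "K - x > 0" using that by auto
        then show ?thesis by (simp add: powr_add)
      qed
      moreover have "x - real k = \<sigma> - (K - x)" unfolding K_def by simp
      ultimately show ?thesis unfolding W_def bb by (simp add: algebra_simps)
    qed
    have i1: "((\<lambda>x. (K - x) powr (2 * \<sigma> - 1)) has_integral
        ((K - (real k - 1/2)) powr (2 * \<sigma>) - (K - K) powr (2 * \<sigma>)) / (2 * \<sigma>)) {real k - 1/2..K}"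
      by (rule kernel_has_integral) (use sg0 Kb in auto)
    have i2: "((\<lambda>x. (K - x) powr (2 * \<sigma> + 1 - 1)) has_integral
        ((K - (real k - 1/2)) powr (2 * \<sigma> + 1) - (K - K) powr (2 * \<sigma> + 1)) / (2 * \<sigma> + 1)) {real k - 1/2..K}"
      by (rule kernel_has_integral) (use sg0 Kb in auto)
    have hK: "K - (real k - 1/2) = h" unfolding K_def h_def by simp
    have hp: "h > 0" unfolding h_def using sg0 by simp
    have "((\<lambda>x. \<sigma> * (K - x) powr (2 * \<sigma> - 1) - (K - x) powr (2 * \<sigma> + 1 - 1)) has_integral
        \<sigma> * (h powr (2 * \<sigma>) / (2 * \<sigma>)) - h powr (2 * \<sigma> + 1) / (2 * \<sigma> + 1)) {real k - 1/2..K}"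
      using has_integral_diff[OF has_integral_mult_right[OF i1, of \<sigma>] i2] sg0 unfolding hK by simp
    moreover have "\<sigma> * (h powr (2 * \<sigma>) / (2 * \<sigma>)) - h powr (2 * \<sigma> + 1) / (2 * \<sigma> + 1) = 0"
    proof -
      have "h powr (2 * \<sigma> + 1) = h powr (2 * \<sigma>) * h" using hp by (simp add: powr_add)
      moreover have "2 * \<sigma> + 1 = 2 * h" unfolding h_def by simp
      ultimately show ?thesis using sg0 hp by (simp add: field_simps)
    qed
    ultimately have "((\<lambda>x. \<sigma> * (K - x) powr (2 * \<sigma> - 1) - (K - x) powr (2 * \<sigma> + 1 - 1)) has_integral 0) {real k - 1/2..K}"
      by simp
    then have "integral {real k - 1/2..K} (\<lambda>x. \<sigma> * (K - x) powr (2 * \<sigma> - 1) - (K - x) powr (2 * \<sigma> + 1 - 1)) = 0"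
      by (rule integral_unique)
    moreover have "integral {real k - 1/2..K} (\<lambda>x. (x - real k) * W x)
        = integral {real k - 1/2..K} (\<lambda>x. \<sigma> * (K - x) powr (2 * \<sigma> - 1) - (K - x) powr (2 * \<sigma> + 1 - 1))"
      by (rule integral_cong) (rule eq)
    ultimately show ?thesis by simp
  qed
  have hp: "h > 0" unfolding h_def using sg0 by simp
  define tt where "tt = \<tau> powr (2 - \<alpha>)"
  have hC: "coef_c \<alpha> \<sigma> \<tau> k k = 3/2 * tt * integral {0..1/2} (\<lambda>x. (1 - x) * W x)"
    by (simp add: coef_c_def W_def K_def \<beta>_def tt_def)
  have hA1: "coef_a \<alpha> \<sigma> \<tau> k 1 = 3/2 * tt * integral {0..1/2} (\<lambda>x. (x - 1/3) * W x)"
    by (simp add: coef_a_def W_def K_def \<beta>_def tt_def)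
  have hAl: "coef_a \<alpha> \<sigma> \<tau> k l = tt * integral {real l - 3/2..real l - 1/2} (\<lambda>x. (x - real l + 1) * W x)"
    if l: "2 \<le> l" "l \<le> k" for l
  proof -
    define F where "F = (\<lambda>x. (x - real l + 1) * W x)"
    have "integral {0..1} (\<lambda>s. (s - 1/2) * (real k + \<sigma> - real l + 3/2 - s) powr (1 - \<alpha>))
        = integral {0..1} (\<lambda>s. F (s + (real l - 3/2)))"
      by (rule integral_cong) (simp add: F_def W_def K_def \<beta>_def algebra_simps)
    also have "\<dots> = integral {real l - 3/2..1 + (real l - 3/2)} F"
    proof (rule integral_translate)
      have e: "1 + (real l - 3/2) = real l - 1/2" by simp
      show "F integrable_on {real l - 3/2..1 + (real l - 3/2)}"
        unfolding e F_def by (rule intW) (use l Kb in \<open>auto intro!: continuous_intros\<close>)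
    qed
    also have "1 + (real l - 3/2) = real l - 1/2" by simp
    finally show ?thesis using l unfolding coef_a_def tt_def F_def by simp
  qed
  have hBl: "coef_b \<alpha> \<sigma> \<tau> k (l - 1) = tt * integral {real l - 3/2..real l - 1/2} (\<lambda>x. (real l - x) * W x)"
    if l: "2 \<le> l" "l \<le> k" for l
  proof -
    define F where "F = (\<lambda>x. (real l - x) * W x)"
    have "integral {0..1} (\<lambda>s. (3/2 - s) * (real k + \<sigma> - real (l - 1) + 1/2 - s) powr (1 - \<alpha>))
        = integral {0..1} (\<lambda>s. F (s + (real l - 3/2)))"
      by (rule integral_cong) (use l in \<open>simp add: F_def W_def K_def \<beta>_def algebra_simps of_nat_diff\<close>)
    also have "\<dots> = integral {real l - 3/2..1 + (real l - 3/2)} F"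
    proof (rule integral_translate)
      have e: "1 + (real l - 3/2) = real l - 1/2" by simp
      show "F integrable_on {real l - 3/2..1 + (real l - 3/2)}"
        unfolding e F_def by (rule intW) (use l Kb in \<open>auto intro!: continuous_intros\<close>)
    qed
    also have "1 + (real l - 3/2) = real l - 1/2" by simp
    finally show ?thesis using l unfolding coef_b_def tt_def F_def by simp
  qed
  have hBk: "coef_b \<alpha> \<sigma> \<tau> k k = tt * integral {real k - 1/2..K} W"
  proof -
    have "integral {0..\<sigma> + 1/2} (\<lambda>s. s powr (1 - \<alpha>)) = h powr (\<beta> + 1) / (\<beta> + 1)"
      using has_integral_powr_from_0[of \<beta> h] b1 hp unfolding h_def \<beta>_def
      by (auto intro: integral_unique)
    moreover have "integral {real k - 1/2..K} W = h powr (\<beta> + 1) / (\<beta> + 1)"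
    proof -
      have "integral {real k - 1/2..K} W
          = ((K - (real k - 1/2)) powr (\<beta> + 1) - (K - K) powr (\<beta> + 1)) / (\<beta> + 1)"
        unfolding W_def by (rule kernel_integral) (use b1 Kb in auto)
      moreover have "K - (real k - 1/2) = h" unfolding K_def h_def by simp
      ultimately show ?thesis using b1 by simp
    qed
    ultimately show ?thesis by (simp add: coef_b_def tt_def)
  qed
  have ttb: "tt = \<tau> powr \<beta> * \<tau>"
  proof -
    have "tt = \<tau> powr ((1 - \<alpha>) + 1)" unfolding tt_def by simp
    also have "\<dots> = \<tau> powr (1 - \<alpha>) * \<tau> powr 1" by (rule powr_add)
    also have "\<dots> = \<tau> powr (1 - \<alpha>) * \<tau>" using tp by simp
    finally show ?thesis unfolding \<beta>_def .
  qed
  have cap: "caputo \<alpha> (D 2) (real k * \<tau> + \<sigma> * \<tau>) = 1 / Gamma (2 - \<alpha>) * (tt * integral {0..K} (\<lambda>x. D 2 (\<tau> * x) * W x))"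
  proof -
    define J where "J = integral {0..K} (\<lambda>x. D 2 (\<tau> * x) * W x)"
    have HJ: "((\<lambda>x. D 2 (\<tau> * x) * W x) has_integral J) {0..K}"
      unfolding J_def using intWg[of 0 K] Kb by (auto intro: integrable_integral)
    have A': "((\<lambda>s. D 2 s * W (s / \<tau>)) has_integral \<tau> * J) {0..\<tau> * K}"
      using has_integral_affinity'[OF HJ[unfolded cbox_interval[symmetric]], of "1/\<tau>" 0] tp
      by (simp add: cbox_interval)
    have "integral {0..real k * \<tau> + \<sigma> * \<tau>} (\<lambda>s. D 2 s * (real k * \<tau> + \<sigma> * \<tau> - s) powr (1 - \<alpha>))
        = integral {0..\<tau> * K} (\<lambda>s. \<tau> powr \<beta> * (D 2 s * W (s / \<tau>)))"
    proof -
      have e: "real k * \<tau> + \<sigma> * \<tau> = \<tau> * K" unfolding K_def by (simp add: algebra_simps)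
      show ?thesis unfolding e
      proof (rule integral_cong)
        fix s assume s: "s \<in> {0..\<tau> * K}"
        have "\<tau> * K - s = \<tau> * (K - s / \<tau>)" using tp by (simp add: field_simps)
        moreover have "0 \<le> K - s / \<tau>" using s tp by (simp add: field_simps mult.commute)
        ultimately have "(\<tau> * K - s) powr \<beta> = \<tau> powr \<beta> * (K - s / \<tau>) powr \<beta>"
          using tp by (simp add: powr_mult)
        then show "D 2 s * (\<tau> * K - s) powr (1 - \<alpha>) = \<tau> powr \<beta> * (D 2 s * W (s / \<tau>))"
          unfolding W_def \<beta>_def by simp
      qed
    qed
    also have "\<dots> = \<tau> powr \<beta> * (\<tau> * J)"
      by (rule integral_unique[OF has_integral_mult_right[OF A']])
    also have "\<dots> = tt * J" using ttb by simp
    finally show ?thesis unfolding caputo_def J_def by simp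
  qed
  define L1f where "L1f = (\<lambda>x. 3/2 * (1 - x) * d 0 + 3/2 * (x - 1/3) * d 1)"
  define Llf where "Llf = (\<lambda>l x. (real l - x) * d (l - 1) + (x - real l + 1) * d l)"
  define IL1 where "IL1 = integral {0..1/2} (\<lambda>x. L1f x * W x)"
  define ILl where "ILl = (\<lambda>l. integral {real l - 3/2..real l - 1/2} (\<lambda>x. Llf l x * W x))"
  define IWK where "IWK = integral {real k - 1/2..K} W"
  define g where "g = (\<lambda>x. D 2 (\<tau> * x))"
  define Ig0 where "Ig0 = integral {0..1/2} (\<lambda>x. g x * W x)"
  define Igl where "Igl = (\<lambda>l. integral {real l - 3/2..real l - 1/2} (\<lambda>x. g x * W x))"
  define IgK where "IgK = integral {real k - 1/2..K} (\<lambda>x. g x * W x)"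
  have pieceI: "real l - 3/2 \<le> real l - 1/2" "real l - 1/2 \<le> K" "0 \<le> real l - 3/2" if "2 \<le> l" "l \<le> k" for l
  proof -
    have "real l \<le> real k" "2 \<le> real l" using that by auto
    then show "real l - 3/2 \<le> real l - 1/2" "real l - 1/2 \<le> K" "0 \<le> real l - 3/2" using Kb by auto
  qed
  have t1: "coef_c \<alpha> \<sigma> \<tau> k k * d 0 + coef_a \<alpha> \<sigma> \<tau> k 1 * d 1 = tt * IL1"
  proof -
    have "IL1 = integral {0..1/2} (\<lambda>x. ((3/2 * d 0) * (1 - x) + (3/2 * d 1) * (x - 1/3)) * W x)"
      unfolding IL1_def L1f_def by (rule integral_cong) (simp add: algebra_simps)
    also have "\<dots> = (3/2 * d 0) * integral {0..1/2} (\<lambda>x. (1 - x) * W x)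
                   + (3/2 * d 1) * integral {0..1/2} (\<lambda>x. (x - 1/3) * W x)"
      by (rule lin2; rule intW) (use Kb in \<open>auto intro!: continuous_intros\<close>)
    finally show ?thesis unfolding hC hA1 by (simp add: algebra_simps)
  qed
  have t2: "coef_a \<alpha> \<sigma> \<tau> k l * d l + coef_b \<alpha> \<sigma> \<tau> k (l - 1) * d (l - 1) = tt * ILl l"
    if l: "2 \<le> l" "l \<le> k" for l
  proof -
    have "ILl l = integral {real l - 3/2..real l - 1/2}
          (\<lambda>x. (d (l - 1) * (real l - x) + d l * (x - real l + 1)) * W x)"
      unfolding ILl_def Llf_def by (rule integral_cong) (simp add: algebra_simps)
    also have "\<dots> = d (l - 1) * integral {real l - 3/2..real l - 1/2} (\<lambda>x. (real l - x) * W x)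
                   + d l * integral {real l - 3/2..real l - 1/2} (\<lambda>x. (x - real l + 1) * W x)"
      by (rule lin2; rule intW) (use pieceI[OF l] in \<open>auto intro!: continuous_intros\<close>)
    finally show ?thesis unfolding hAl[OF l] hBl[OF l] by (simp add: algebra_simps)
  qed
  have t3: "coef_b \<alpha> \<sigma> \<tau> k k * d k = tt * (d k * IWK)"
    unfolding hBk IWK_def by simp
  have csum: "(\<Sum>l=0..k. coef_c \<alpha> \<sigma> \<tau> k l * d (k - l)) = tt * (IL1 + (\<Sum>l=2..k. ILl l) + d k * IWK)"
  proof -
    define C where "C = coef_c \<alpha> \<sigma> \<tau> k k"
    have cc: "coef_c \<alpha> \<sigma> \<tau> k l = (if l = k then C
              else coef_a \<alpha> \<sigma> \<tau> k (k - l) + coef_b \<alpha> \<sigma> \<tau> k (k - l))" for l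
      unfolding C_def by (simp add: coef_c_def)
    have "(\<Sum>l=0..k. coef_c \<alpha> \<sigma> \<tau> k l * d (k - l))
        = C * d 0 + coef_a \<alpha> \<sigma> \<tau> k 1 * d 1
          + (\<Sum>l=2..k. coef_a \<alpha> \<sigma> \<tau> k l * d l + coef_b \<alpha> \<sigma> \<tau> k (l - 1) * d (l - 1))
          + coef_b \<alpha> \<sigma> \<tau> k k * d k"
      unfolding cc by (rule sum_reorg[OF k1])
    also have "(\<Sum>l=2..k. coef_a \<alpha> \<sigma> \<tau> k l * d l + coef_b \<alpha> \<sigma> \<tau> k (l - 1) * d (l - 1))
        = (\<Sum>l=2..k. tt * ILl l)"
      by (rule sum.cong) (use t2 in simp_all)
    also have "\<dots> = tt * (\<Sum>l=2..k. ILl l)" by (simp add: sum_distrib_left)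
    finally show ?thesis unfolding C_def t1 t3 by (simp add: algebra_simps)
  qed
  have gsplit: "integral {0..K} (\<lambda>x. g x * W x) = Ig0 + (\<Sum>l=2..k. Igl l) + IgK"
  proof -
    have "integral {0..real k - 1/2} (\<lambda>x. g x * W x) + IgK = integral {0..K} (\<lambda>x. g x * W x)"
      unfolding IgK_def g_def
      by (rule Henstock_Kurzweil_Integration.integral_combine) (use Kb intWg[of 0 K] in auto)
    moreover have "integral {0..real k - 1/2} (\<lambda>x. g x * W x) = Ig0 + (\<Sum>l=2..k. Igl l)"
      unfolding Ig0_def Igl_def g_def
      by (rule integral_split_pieces[OF k1]) (rule intWg; use Kb in auto)
    ultimately show ?thesis by simp
  qed
  have Wsplit: "integral {0..real k - 1/2} W = integral {0..1/2} W
      + (\<Sum>l=2..k. integral {real l - 3/2..real l - 1/2} W)"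
    by (rule integral_split_pieces[OF k1]) (rule intW1; use Kb in auto)
  have D1: "\<bar>Ig0 - IL1\<bar> \<le> 13/24 * (M * \<tau>^2) * integral {0..1/2} W"
  proof -
    have "Ig0 - IL1 = integral {0..1/2} (\<lambda>x. (g x - L1f x) * W x)"
    proof -
      have "Ig0 - IL1 = integral {0..1/2} (\<lambda>x. g x * W x - L1f x * W x)"
        unfolding Ig0_def IL1_def g_def L1f_def
        by (rule integral_diff[symmetric]; rule intW) (use Kb contg in \<open>auto intro!: continuous_intros\<close>)
      then show ?thesis by (simp add: algebra_simps)
    qed
    also have "\<bar>\<dots>\<bar> \<le> 13/24 * (M * \<tau>^2) * integral {0..1/2} W"
    proof (rule bound_int)
      show "(\<lambda>x. (g x - L1f x) * W x) integrable_on {0..1/2}"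
        unfolding g_def L1f_def by (rule intW) (use Kb contg in \<open>auto intro!: continuous_intros\<close>)
      fix x assume "x \<in> {0..(1::real)/2}"
      then show "\<bar>g x - L1f x\<bar> \<le> 13/24 * (M * \<tau>^2)"
        unfolding g_def L1f_def using B1 by auto
    qed (use Kb in auto)
    finally show ?thesis .
  qed
  have Dl: "\<bar>Igl l - ILl l\<bar> \<le> 13/24 * (M * \<tau>^2) * integral {real l - 3/2..real l - 1/2} W"
    if l: "2 \<le> l" "l \<le> k" for l
  proof -
    note pI = pieceI[OF l]
    have cg: "continuous_on {real l - 3/2..real l - 1/2} (\<lambda>x. D 2 (\<tau> * x))"
      by (rule contg) (use pI Kb in auto)
    have "Igl l - ILl l = integral {real l - 3/2..real l - 1/2} (\<lambda>x. (g x - Llf l x) * W x)"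
    proof -
      have "Igl l - ILl l = integral {real l - 3/2..real l - 1/2} (\<lambda>x. g x * W x - Llf l x * W x)"
        unfolding Igl_def ILl_def g_def Llf_def
        by (rule integral_diff[symmetric]; rule intW) (use pI cg in \<open>auto intro!: continuous_intros\<close>)
      then show ?thesis by (simp add: algebra_simps)
    qed
    also have "\<bar>\<dots>\<bar> \<le> 13/24 * (M * \<tau>^2) * integral {real l - 3/2..real l - 1/2} W"
    proof (rule bound_int)
      show "(\<lambda>x. (g x - Llf l x) * W x) integrable_on {real l - 3/2..real l - 1/2}"
        unfolding g_def Llf_def by (rule intW) (use pI cg in \<open>auto intro!: continuous_intros\<close>)
      fix x assume "x \<in> {real l - 3/2..real l - 1/2}"
      then show "\<bar>g x - Llf l x\<bar> \<le> 13/24 * (M * \<tau>^2)"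
        unfolding g_def Llf_def using Bl[OF l] by auto
    qed (use pI in auto)
    finally show ?thesis .
  qed
  have DK: "\<bar>IgK - d k * IWK\<bar> \<le> 5/24 * (M * \<tau>^2) * IWK"
  proof -
    define c where "c = \<tau> * D 3 (real k * \<tau>)"
    have cg: "continuous_on {real k - 1/2..K} (\<lambda>x. D 2 (\<tau> * x))"
      by (rule contg) (use Kb in auto)
    have i1: "(\<lambda>x. g x * W x) integrable_on {real k - 1/2..K}"
      unfolding g_def by (rule intWg) (use Kb in auto)
    have i2: "W integrable_on {real k - 1/2..K}" by (rule intW1) (use Kb in auto)
    have i3: "(\<lambda>x. (x - real k) * W x) integrable_on {real k - 1/2..K}"
      by (rule intW) (use Kb in \<open>auto intro!: continuous_intros\<close>)
    have "integral {real k - 1/2..K} (\<lambda>x. (g x - d k - c * (x - real k)) * W x)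
        = integral {real k - 1/2..K} (\<lambda>x. (g x * W x - d k * W x) - c * ((x - real k) * W x))"
      by (rule integral_cong) (simp add: algebra_simps)
    also have "\<dots> = (IgK - d k * IWK) - c * 0"
      using i1 i2 i3 zeroK unfolding IgK_def IWK_def
      by (simp add: integral_diff integrable_diff integrable_on_mult_right)
    finally have eq: "IgK - d k * IWK = integral {real k - 1/2..K} (\<lambda>x. (g x - d k - c * (x - real k)) * W x)"
      by simp
    have "\<bar>integral {real k - 1/2..K} (\<lambda>x. (g x - d k - c * (x - real k)) * W x)\<bar>
        \<le> 5/24 * (M * \<tau>^2) * integral {real k - 1/2..K} W"
    proof (rule bound_int)
      show "(\<lambda>x. (g x - d k - c * (x - real k)) * W x) integrable_on {real k - 1/2..K}"
        unfolding g_def by (rule intW) (use Kb cg in \<open>auto intro!: continuous_intros\<close>)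
      fix x assume x: "x \<in> {real k - 1/2..K}"
      have e: "g x - d k - c * (x - real k) = D 2 (\<tau> * x) - d k - \<tau> * (x - real k) * D 3 (real k * \<tau>)"
        unfolding g_def c_def by (simp add: algebra_simps)
      have xb: "real k - 1/2 \<le> x" "x \<le> real k + \<sigma>" using x unfolding K_def by auto
      show "\<bar>g x - d k - c * (x - real k)\<bar> \<le> 5/24 * (M * \<tau>^2)"
        unfolding e by (rule BK[OF xb])
    qed (use Kb in auto)
    then show ?thesis unfolding eq[symmetric] IWK_def[symmetric] .
  qed
  define X where "X = (Ig0 - IL1) + (\<Sum>l=2..k. Igl l - ILl l) + (IgK - d k * IWK)"
  define G where "G = Gamma (2 - \<alpha>)"
  have errX: "caputo \<alpha> (D 2) (real k * \<tau> + \<sigma> * \<tau>)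
           - (1 / Gamma (2 - \<alpha>)) * (\<Sum>l=0..k. coef_c \<alpha> \<sigma> \<tau> k l * delta2 \<tau> p (D 1) (k - l))
        = 1 / G * tt * X"
  proof -
    have c1: "caputo \<alpha> (D 2) (real k * \<tau> + \<sigma> * \<tau>) = 1 / G * (tt * (Ig0 + (\<Sum>l=2..k. Igl l) + IgK))"
      using cap gsplit unfolding g_def G_def by simp
    have c2: "(\<Sum>l=0..k. coef_c \<alpha> \<sigma> \<tau> k l * delta2 \<tau> p (D 1) (k - l)) = tt * (IL1 + (\<Sum>l=2..k. ILl l) + d k * IWK)"
      using csum unfolding d_def .
    have c3: "X = (Ig0 + (\<Sum>l=2..k. Igl l) + IgK) - (IL1 + (\<Sum>l=2..k. ILl l) + d k * IWK)"
      unfolding X_def by (simp add: sum_subtractf)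
    show ?thesis unfolding c1 c2 c3 G_def by (simp add: algebra_simps)
  qed
  define Kp where "Kp = K powr (2 - \<alpha>)"
  define hq where "hq = h powr (2 - \<alpha>)"
  define s2 where "s2 = 2 - \<alpha>"
  have s2p: "s2 > 0" unfolding s2_def using a2 by simp
  have bs: "\<beta> + 1 = s2" unfolding \<beta>_def s2_def by simp
  have IW0: "integral {0..real k - 1/2} W = (Kp - hq) / s2"
  proof -
    have "integral {0..real k - 1/2} W = ((K - 0) powr (\<beta> + 1) - (K - (real k - 1/2)) powr (\<beta> + 1)) / (\<beta> + 1)"
      unfolding W_def by (rule kernel_integral) (use b1 Kb in auto)
    moreover have "K - (real k - 1/2) = h" unfolding K_def h_def by simp
    ultimately show ?thesis unfolding Kp_def hq_def bs[symmetric] by (simp add: \<beta>_def)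
  qed
  have IWK': "IWK = hq / s2"
  proof -
    have "IWK = ((K - (real k - 1/2)) powr (\<beta> + 1) - (K - K) powr (\<beta> + 1)) / (\<beta> + 1)"
      unfolding IWK_def W_def by (rule kernel_integral) (use b1 Kb in auto)
    moreover have "K - (real k - 1/2) = h" unfolding K_def h_def by simp
    ultimately show ?thesis unfolding hq_def bs[symmetric] using b1 by (simp add: \<beta>_def)
  qed
  have Xb: "\<bar>X\<bar> \<le> 13/24 * (M * \<tau>^2) * ((Kp - hq) / s2) + 5/24 * (M * \<tau>^2) * (hq / s2)"
  proof -
    have "\<bar>(\<Sum>l=2..k. Igl l - ILl l)\<bar> \<le> (\<Sum>l=2..k. \<bar>Igl l - ILl l\<bar>)" by (rule sum_abs)
    also have "\<dots> \<le> (\<Sum>l=2..k. 13/24 * (M * \<tau>^2) * integral {real l - 3/2..real l - 1/2} W)"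
      by (rule sum_mono) (use Dl in simp)
    also have "\<dots> = 13/24 * (M * \<tau>^2) * (\<Sum>l=2..k. integral {real l - 3/2..real l - 1/2} W)"
      by (simp add: sum_distrib_left)
    finally have Sb: "\<bar>(\<Sum>l=2..k. Igl l - ILl l)\<bar> \<le> 13/24 * (M * \<tau>^2) * (\<Sum>l=2..k. integral {real l - 3/2..real l - 1/2} W)" .
    have "\<bar>X\<bar> \<le> \<bar>Ig0 - IL1\<bar> + \<bar>(\<Sum>l=2..k. Igl l - ILl l)\<bar> + \<bar>IgK - d k * IWK\<bar>"
      unfolding X_def by (rule order_trans[OF abs_triangle_ineq add_right_mono[OF abs_triangle_ineq]])
    also have "\<dots> \<le> 13/24 * (M * \<tau>^2) * integral {0..1/2} W
        + 13/24 * (M * \<tau>^2) * (\<Sum>l=2..k. integral {real l - 3/2..real l - 1/2} W)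
        + 5/24 * (M * \<tau>^2) * IWK"
      using D1 Sb DK by linarith
    also have "\<dots> = 13/24 * (M * \<tau>^2) * integral {0..real k - 1/2} W + 5/24 * (M * \<tau>^2) * IWK"
      unfolding Wsplit by (simp add: algebra_simps)
    finally show ?thesis unfolding IW0 IWK' .
  qed
  have Gp: "G > 0" unfolding G_def using a2 by simp
  have ttp: "tt > 0" unfolding tt_def using tp by simp
  have hK: "hq \<le> Kp" unfolding hq_def Kp_def
    by (rule powr_mono2) (use a2 hp k1 in \<open>auto simp: h_def K_def\<close>)
  have fin: "\<bar>1 / G * tt * X\<bar> \<le> 1 / (s2 * G) * M * (5 * (tt * Kp) / 6 * \<tau>^2 - 5 / 8 * hq * (tt * \<tau>^2))"
    by (rule final_alg[OF Gp s2p ttp M0 hK Xb])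
  have G3: "Gamma (3 - \<alpha>) = s2 * G"
  proof -
    have e: "3 - \<alpha> = s2 + 1" unfolding s2_def by simp
    have ns: "s2 \<notin> \<int>\<^sub>\<le>\<^sub>0" using s2p by (auto dest: nonpos_Ints_nonpos)
    have g: "G = Gamma s2" unfolding G_def s2_def ..
    show ?thesis unfolding e g by (rule Gamma_plus1[OF ns])
  qed
  have P1: "(real k * \<tau> + \<sigma> * \<tau>) powr (2 - \<alpha>) = tt * Kp"
  proof -
    have "real k * \<tau> + \<sigma> * \<tau> = \<tau> * K" unfolding K_def by (simp add: algebra_simps)
    then show ?thesis unfolding tt_def Kp_def using tp Kb by (simp add: powr_mult)
  qed
  have P2: "\<tau> powr (4 - \<alpha>) = tt * \<tau>^2"
  proof -
    have "\<tau> powr (4 - \<alpha>) = \<tau> powr ((2 - \<alpha>) + 2)" by simp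
    also have "\<dots> = \<tau> powr (2 - \<alpha>) * \<tau> powr 2" by (rule powr_add)
    finally show ?thesis unfolding tt_def using tp by simp
  qed
  have P3: "(\<sigma> + 1/2) powr (2 - \<alpha>) = hq" unfolding hq_def h_def ..
  have P4: "(SUP t\<in>{0..real (k+1) * \<tau>}. \<bar>D 4 t\<bar>) = M" unfolding M_def S_def ..
  show ?thesis unfolding errX G3 P1 P2 P3 P4 using fin by simp
qed


end
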